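(* Let $\mathcal Z$ be an instance space, $\mathcal W$ a hypothesis space and $\ell:\mathcal W\times\mathcal Z\to\mathbb R^+$ a non-negative loss function. Let $\mu$ (source) and $\mu'$ (target) be probability distributions on $\mathcal Z$ with $\mu\ll\mu'$. Fix $n$ and $\beta\in(0,1)$ with $\beta n$ an integer, and let $S'=\{Z_1,\dots,Z_{\beta n}\}$ be drawn IID from $\mu'$ and $S=\{Z_{\beta n+1},\dots,Z_n\}$ be drawn IID from $\mu$, independently. For $\alpha\in[0,1]$ define $$\hat L_\alpha(w,S,S')=\frac{\alpha}{\beta n}\sum_{i=1}^{\beta n}\ell(w,Z_i)+\frac{1-\alpha}{(1-\beta)n}\sum_{i=\beta n+1}^{n}\ell(w,Z_i),$$ and let $W_{\mathsf{ERM}}=\operatorname{argmin}_{w}\hat L_\alpha(w,S,S')$, produced by a (possibly randomized) algorithm described by a conditional distribution $P_{W|SS'}$. Let $L_{\mu'}(w)=\mathbb E_{Z\sim\mu'}[\ell(w,Z)]$ and $\mathrm{gen}(W_{\mathsf{ERM}},S,S')=L_{\mu'}(W_{\mathsf{ERM}})-\hat L_\alpha(W_{\mathsf{ERM}},S,S')$. Let $P_W$ be the marginal distribution of $W_{\mathsf{ERM}}$. Assume there are $b_-<0<b_+$ and a function $\psi$ such that, under the product distribution $(W,Z)\sim P_W\otimes\mu'$, for all $\lambda\in(b_-,b_+)$, $$\log\mathbb E\big[e^{\lambda(\ell(W,Z)-\mathbb E[\ell(W,Z)])}\big]\le\psi(\lambda).$$ Define $\psi^{*-1}_{-}(x)=\inf_{\lambda\in[0,-b_-)}\frac{x+\psi(-\lambda)}{\lambda}$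 and $\psi^{*-1}_{+}(x)=\inf_{\lambda\in[0,b_+)}\frac{x+\psi(\lambda)}{\lambda}$. Then $$\mathbb E_{WSS'}[\mathrm{gen}(W_{\mathsf{ERM}},S,S')]\le\frac{\alpha}{\beta n}\sum_{i=1}^{\beta n}\psi^{*-1}_{-}(I(W_{\mathsf{ERM}};Z_i))+\frac{1-\alpha}{(1-\beta)n}\sum_{i=\beta n+1}^{n}\psi^{*-1}_{-}\big(I(W_{\mathsf{ERM}};Z_i)+D(\mu\|\mu')\big),$$ $$-\mathbb E_{WSS'}[\mathrm{gen}(W_{\mathsf{ERM}},S,S')]\le\frac{\alpha}{\beta n}\sum_{i=1}^{\beta n}\psi^{*-1}_{+}(I(W_{\mathsf{ERM}};Z_i))+\frac{1-\alpha}{(1-\beta)n}\sum_{i=\beta n+1}^{n}\psi^{*-1}_{+}\big(I(W_{\mathsf{ERM}};Z_i)+D(\mu\|\mu')\big).$$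
   Context: $I(\cdot;\cdot)$ denotes mutual information and $D(\mu\|\mu')$ the Kullback–Leibler divergence. The expectation $\mathbb E_{WSS'}$ is over the joint distribution $P_{WSS'}(w,z^n)=P_{W|SS'}(w|z^n)\prod_{i=1}^{\beta n}\mu'(z_i)\prod_{i=\beta n+1}^n\mu(z_i)$, and mutual informations are computed under this joint distribution. *)

theory Defs
  imports "HOL-Probability.Probability"
begin

definition KL_ext :: "real \<Rightarrow> 'a measure \<Rightarrow> 'a measure \<Rightarrow> ereal" where
  "KL_ext b M N =
     (if absolutely_continuous M N \<and> integrable N (entropy_density b M N)
      then ereal (KL_divergence b M N) else \<infinity>)"

definition MI_ext :: "real \<Rightarrow> 'a measure \<Rightarrow> 'b measure \<Rightarrow> 'c measure
    \<Rightarrow> ('a \<Rightarrow> 'b) \<Rightarrow> ('a \<Rightarrow> 'c) \<Rightarrow> ereal" where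
  "MI_ext b P S T X Y =
     KL_ext b (distr P S X \<Otimes>\<^sub>M distr P T Y) (distr P (S \<Otimes>\<^sub>M T) (\<lambda>x. (X x, Y x)))"

text \<open>Generalized inverse  inf over lambda in (0,c) of (x + g lambda) / lambda.
  psi_{*-1}_+ x = psi_inv psi b_+ x ; psi_{*-1}_- x = psi_inv (\<lambda>l. psi (-l)) (-b_-) x.\<close>
definition psi_inv :: "(real \<Rightarrow> real) \<Rightarrow> real \<Rightarrow> ereal \<Rightarrow> ereal" where
  "psi_inv g c x = (INF l\<in>{0<..<c}. (x + ereal (g l)) / ereal l)"

text \<open>Weighted empirical risk; samples z 1 .. z k from the target, z (k+1) .. z n
  from the source, with k = beta n.\<close>
definition Lhat :: "('w \<Rightarrow> 'z \<Rightarrow> real) \<Rightarrow> real \<Rightarrow> real \<Rightarrow> nat \<Rightarrow> nat \<Rightarrow> 'w \<Rightarrow> (nat \<Rightarrow> 'z) \<Rightarrow> real" where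
  "Lhat loss \<alpha> \<beta> k n w z =
     \<alpha> / (\<beta> * real n) * (\<Sum>i\<in>{1..k}. loss w (z i))
     + (1 - \<alpha>) / ((1 - \<beta>) * real n) * (\<Sum>i\<in>{k+1..n}. loss w (z i))"

definition pop_risk :: "('w \<Rightarrow> 'z \<Rightarrow> real) \<Rightarrow> 'z measure \<Rightarrow> 'w \<Rightarrow> real" where
  "pop_risk loss \<mu> w = (\<integral>z. loss w z \<partial>\<mu>)"

definition gen_err :: "('w \<Rightarrow> 'z \<Rightarrow> real) \<Rightarrow> 'z measure \<Rightarrow> real \<Rightarrow> real \<Rightarrow> nat \<Rightarrow> nat
    \<Rightarrow> 'w \<Rightarrow> (nat \<Rightarrow> 'z) \<Rightarrow> real" where
  "gen_err loss \<mu>' \<alpha> \<beta> k n w z = pop_risk loss \<mu>' w - Lhat loss \<alpha> \<beta> k n w z"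

end

theory Submission
  imports Defs
begin


lemma DV:
  fixes Q :: "'b measure" and h f :: "'b \<Rightarrow> real"
  assumes Q: "prob_space Q" and P: "prob_space P"
    and Pd: "P = density Q (\<lambda>x. ennreal (h x))"
    and hm[measurable]: "h \<in> borel_measurable Q" and hnn: "\<And>x. 0 \<le> h x"
    and fm[measurable]: "f \<in> borel_measurable Q"
    and fi: "integrable P f" and li: "integrable P (\<lambda>x. ln (h x))"
    and ei: "integrable Q (\<lambda>x. exp (f x))"
  shows "(\<integral>x. f x \<partial>P) \<le> (\<integral>x. ln (h x) \<partial>P) + ln (\<integral>x. exp (f x) \<partial>Q)"
proof -
  interpret Q: prob_space Q by fact
  interpret P: prob_space P by fact
  define E where "E = (\<integral>x. exp (f x) \<partial>Q)"
  have Epos: "0 < E"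
  proof -
    have "0 \<le> E" unfolding E_def by (simp add: integral_nonneg_AE)
    moreover have "E \<noteq> 0"
    proof
      assume "E = 0"
      then have "AE x in Q. exp (f x) = 0"
        using integral_nonneg_eq_0_iff_AE[OF ei] unfolding E_def by auto
      then have "AE x in Q. False" by simp
      then show False using Q.AE_False by simp
    qed
    ultimately show ?thesis by simp
  qed
  define c where "c = ln E"
  define q where "q x = exp (f x - c) / h x" for x
  have fmP[measurable]: "f \<in> borel_measurable P" "h \<in> borel_measurable P" using fm hm by (simp_all add: Pd)
  have qm[measurable]: "q \<in> borel_measurable Q" unfolding q_def by measurable
  have AEh: "AE x in P. 0 < h x" unfolding Pd by (subst AE_density) auto
  have pt: "AE x in P. f x - c - ln (h x) \<le> q x - 1"
    using AEh
  proof eventually_elim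
    case (elim x)
    have "ln (q x) = f x - c - ln (h x)" unfolding q_def using elim by (simp add: ln_div)
    moreover have "ln (q x) \<le> q x - 1" by (rule ln_le_minus_one) (simp add: q_def elim)
    ultimately show ?case by simp
  qed
  have bnd: "\<And>x. norm (h x *\<^sub>R q x) \<le> norm (exp (f x - c))"
    using hnn by (auto simp: q_def)
  have bnd': "\<And>x. \<bar>h x * q x\<bar> \<le> exp (f x - c)" using bnd by simp
  have ei2: "integrable Q (\<lambda>x. exp (f x - c))"
    using ei by (simp add: exp_diff)
  have iQ: "integrable Q (\<lambda>x. h x *\<^sub>R q x)"
    by (rule Bochner_Integration.integrable_bound[OF ei2]) (use bnd' in auto)
  have iq: "integrable P q" unfolding Pd
    by (subst integrable_density) (use iQ hnn in auto)
  have "(\<integral>x. q x \<partial>P) = (\<integral>x. h x *\<^sub>R q x \<partial>Q)" unfolding Pd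
    by (subst integral_density) (use hnn in auto)
  also have "\<dots> \<le> (\<integral>x. exp (f x - c) \<partial>Q)"
    by (rule integral_mono[OF iQ ei2]) (use bnd' in \<open>auto intro: order_trans[OF abs_ge_self]\<close>)
  also have "\<dots> = E / exp c" unfolding E_def by (simp add: exp_diff)
  also have "\<dots> = 1" unfolding c_def using Epos by simp
  finally have q1: "(\<integral>x. q x \<partial>P) \<le> 1" .
  have "(\<integral>x. f x - c - ln (h x) \<partial>P) \<le> (\<integral>x. q x - 1 \<partial>P)"
    by (rule integral_mono_AE) (use fi li iq pt in auto)
  also have "\<dots> = (\<integral>x. q x \<partial>P) - 1" using iq by (simp add: P.prob_space)
  finally have "(\<integral>x. f x - c - ln (h x) \<partial>P) \<le> 0" using q1 by simp
  moreover have "(\<integral>x. f x - c - ln (h x) \<partial>P) = (\<integral>x. f x \<partial>P) - c - (\<integral>x. ln (h x) \<partial>P)"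
    using fi li by (simp add: P.prob_space)
  ultimately show ?thesis unfolding c_def E_def by simp
qed



lemma KL_finite_density:
  assumes Q: "prob_space Q" and P: "prob_space P" and sets: "sets P = sets Q"
    and fin: "KL_ext (exp 1) Q P \<noteq> \<infinity>"
  obtains h where "h \<in> borel_measurable Q" "\<And>x. 0 \<le> h x"
    "P = density Q (\<lambda>x. ennreal (h x))" "integrable P (\<lambda>x. ln (h x))"
    "KL_ext (exp 1) Q P = ereal (\<integral>x. ln (h x) \<partial>P)"
proof -
  interpret Q: prob_space Q by fact
  interpret P: prob_space P by fact
  have ac: "absolutely_continuous Q P" and int: "integrable P (entropy_density (exp 1) Q P)"
    using fin unfolding KL_ext_def by (auto split: if_splits)
  define h where "h x = enn2real (RN_deriv Q P x)" for x
  have hm: "h \<in> borel_measurable Q" unfolding h_def by measurable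
  have ed: "entropy_density (exp 1) Q P = (\<lambda>x. ln (h x))"
    by (auto simp: entropy_density_def h_def log_def fun_eq_iff)
  have "density Q (RN_deriv Q P) = density Q (\<lambda>x. ennreal (h x))"
  proof (rule density_cong)
    from Q.RN_deriv_finite[OF P.sigma_finite_measure_axioms ac sets]
    show "AE x in Q. RN_deriv Q P x = ennreal (h x)"
      by eventually_elim (auto simp: less_top h_def)
  qed (use hm in auto)
  then have Pd: "P = density Q (\<lambda>x. ennreal (h x))"
    using Q.density_RN_deriv[OF ac sets] by simp
  show ?thesis
  proof
    show "h \<in> borel_measurable Q" by fact
    show "\<And>x. 0 \<le> h x" by (simp add: h_def)
    show "P = density Q (\<lambda>x. ennreal (h x))" by fact
    show "integrable P (\<lambda>x. ln (h x))" using int ed by simp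
    show "KL_ext (exp 1) Q P = ereal (\<integral>x. ln (h x) \<partial>P)"
      using fin ed unfolding KL_ext_def KL_divergence_def by (auto split: if_splits)
  qed
qed

lemma ereal_le_div:
  fixes X :: ereal and a l :: real
  assumes "0 < l" "ereal (l * a) \<le> X"
  shows "ereal a \<le> X / ereal l"
proof (cases X)
  case (real r)
  then show ?thesis using assms by (simp add: pos_le_divide_eq mult.commute)
next
  case PInf
  then show ?thesis using assms by simp
next
  case MInf
  then show ?thesis using assms by simp
qed

lemma psi_bounds:
  fixes D :: ereal and e m bm bp :: real and \<psi> :: "real \<Rightarrow> real"
  assumes b: "bm < 0" "0 < bp"
    and H: "\<And>l. l \<in> {bm<..<bp} \<Longrightarrow> ereal (l * (e - m)) \<le> D + ereal (\<psi> l)"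
  shows "ereal (m - e) \<le> psi_inv (\<lambda>l. \<psi> (- l)) (- bm) D"
    and "ereal (e - m) \<le> psi_inv \<psi> bp D"
proof -
  show "ereal (m - e) \<le> psi_inv (\<lambda>l. \<psi> (- l)) (- bm) D"
    unfolding psi_inv_def
  proof (rule INF_greatest)
    fix l assume l: "l \<in> {0<..<- bm}"
    then have "- l \<in> {bm<..<bp}" using b by auto
    from H[OF this] have "ereal (l * (m - e)) \<le> D + ereal (\<psi> (- l))"
      by (simp add: algebra_simps)
    then show "ereal (m - e) \<le> (D + ereal (\<psi> (- l))) / ereal l"
      by (rule ereal_le_div[rotated]) (use l in auto)
  qed
  show "ereal (e - m) \<le> psi_inv \<psi> bp D"
    unfolding psi_inv_def
  proof (rule INF_greatest)
    fix l assume l: "l \<in> {0<..<bp}"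
    then have "l \<in> {bm<..<bp}" using b by auto
    from H[OF this] have "ereal (l * (e - m)) \<le> D + ereal (\<psi> l)" .
    then show "ereal (e - m) \<le> (D + ereal (\<psi> l)) / ereal l"
      by (rule ereal_le_div[rotated]) (use l in auto)
  qed
qed

lemma term_bound:
  fixes Q P :: "'b measure" and h L :: "'b \<Rightarrow> real" and D :: ereal and m :: real
  assumes Q: "prob_space Q" and P: "prob_space P"
    and Pd: "P = density Q (\<lambda>x. ennreal (h x))"
    and hm[measurable]: "h \<in> borel_measurable Q" and hnn: "\<And>x. 0 \<le> h x"
    and li: "integrable P (\<lambda>x. ln (h x))" and DD: "ereal (\<integral>x. ln (h x) \<partial>P) \<le> D"
    and Lm[measurable]: "L \<in> borel_measurable Q" and Li: "integrable P L"
    and ci: "\<And>l. l \<in> {bm<..<bp} \<Longrightarrow> integrable Q (\<lambda>x. exp (l * (L x - m)))"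
    and cb: "\<And>l. l \<in> {bm<..<bp} \<Longrightarrow> ln (\<integral>x. exp (l * (L x - m)) \<partial>Q) \<le> \<psi> l"
    and l: "l \<in> {bm<..<bp}"
  shows "ereal (l * ((\<integral>x. L x \<partial>P) - m)) \<le> D + ereal (\<psi> l)"
proof -
  interpret P: prob_space P by fact
  have "(\<integral>x. l * (L x - m) \<partial>P) \<le> (\<integral>x. ln (h x) \<partial>P) + ln (\<integral>x. exp (l * (L x - m)) \<partial>Q)"
    by (rule DV[OF Q P Pd hm hnn _ _ li ci[OF l]]) (use Li in \<open>auto\<close>)
  also have "\<dots> \<le> (\<integral>x. ln (h x) \<partial>P) + \<psi> l" using cb[OF l] by simp
  finally have r: "l * ((\<integral>x. L x \<partial>P) - m) \<le> (\<integral>x. ln (h x) \<partial>P) + \<psi> l"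
    using Li by (simp add: P.prob_space right_diff_distrib)
  have "ereal (l * ((\<integral>x. L x \<partial>P) - m)) \<le> ereal (\<integral>x. ln (h x) \<partial>P) + ereal (\<psi> l)"
    using r by simp
  also have "\<dots> \<le> D + ereal (\<psi> l)" using DD by (rule add_right_mono)
  finally show ?thesis .
qed



lemma source_density:
  fixes PW :: "'w measure" and \<mu> \<mu>' :: "'z measure" and P :: "('w \<times> 'z) measure"
  assumes PW: "prob_space PW" and mu: "prob_space \<mu>" and mu': "prob_space \<mu>'"
    and sets_mu: "sets \<mu> = sets \<mu>'" and P: "prob_space P"
    and sets_P: "sets P = sets (PW \<Otimes>\<^sub>M \<mu>')"
    and marg: "distr P \<mu>' snd = \<mu>"
    and fin1: "KL_ext (exp 1) (PW \<Otimes>\<^sub>M \<mu>) P \<noteq> \<infinity>"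
    and fin2: "KL_ext (exp 1) \<mu>' \<mu> \<noteq> \<infinity>"
  obtains h where "h \<in> borel_measurable (PW \<Otimes>\<^sub>M \<mu>')" "\<And>x. 0 \<le> h x"
    "P = density (PW \<Otimes>\<^sub>M \<mu>') (\<lambda>x. ennreal (h x))" "integrable P (\<lambda>x. ln (h x))"
    "ereal (\<integral>x. ln (h x) \<partial>P) = KL_ext (exp 1) (PW \<Otimes>\<^sub>M \<mu>) P + KL_ext (exp 1) \<mu>' \<mu>"
proof -
  interpret PW: prob_space PW by fact
  interpret mu: prob_space \<mu> by fact
  interpret mu': prob_space \<mu>' by fact
  interpret P: prob_space P by fact
  have sets_eq: "sets (PW \<Otimes>\<^sub>M \<mu>) = sets (PW \<Otimes>\<^sub>M \<mu>')"
    using sets_mu by (intro sets_pair_measure_cong) auto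
  have pr1: "prob_space (PW \<Otimes>\<^sub>M \<mu>)" by (intro prob_space_pair PW mu)
  obtain h1 where h1m: "h1 \<in> borel_measurable (PW \<Otimes>\<^sub>M \<mu>)" and h1nn: "\<And>x. 0 \<le> h1 x"
    and Pd1: "P = density (PW \<Otimes>\<^sub>M \<mu>) (\<lambda>x. ennreal (h1 x))"
    and h1i: "integrable P (\<lambda>x. ln (h1 x))"
    and K1: "KL_ext (exp 1) (PW \<Otimes>\<^sub>M \<mu>) P = ereal (\<integral>x. ln (h1 x) \<partial>P)"
    using KL_finite_density[OF pr1 P _ fin1] sets_P sets_eq by metis
  obtain g where gm: "g \<in> borel_measurable \<mu>'" and gnn: "\<And>x. 0 \<le> g x"
    and gd: "\<mu> = density \<mu>' (\<lambda>x. ennreal (g x))"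
    and gi: "integrable \<mu> (\<lambda>x. ln (g x))"
    and K2: "KL_ext (exp 1) \<mu>' \<mu> = ereal (\<integral>x. ln (g x) \<partial>\<mu>)"
    using KL_finite_density[OF mu' mu sets_mu fin2] by metis
  have h1m': "h1 \<in> borel_measurable (PW \<Otimes>\<^sub>M \<mu>')"
    using h1m measurable_cong_sets[OF sets_eq refl] by blast
  define G where "G = (\<lambda>x::'w \<times> 'z. ennreal (g (snd x)))"
  have Gm: "G \<in> borel_measurable (PW \<Otimes>\<^sub>M \<mu>')" unfolding G_def using gm by measurable
  have "PW \<Otimes>\<^sub>M \<mu> = density PW (\<lambda>_. 1) \<Otimes>\<^sub>M density \<mu>' (\<lambda>x. ennreal (g x))"
    using gd by (simp add: density_1)
  also have "\<dots> = density (PW \<Otimes>\<^sub>M \<mu>') (\<lambda>(x, y). 1 * ennreal (g y))"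
    by (rule pair_measure_density) (use gm gd mu'.sigma_finite_measure_axioms mu.sigma_finite_measure_axioms in auto)
  also have "\<dots> = density (PW \<Otimes>\<^sub>M \<mu>') G"
    by (simp add: G_def case_prod_beta')
  finally have prodd: "PW \<Otimes>\<^sub>M \<mu> = density (PW \<Otimes>\<^sub>M \<mu>') G" .
  define h where "h x = g (snd x) * h1 x" for x
  have hm: "h \<in> borel_measurable (PW \<Otimes>\<^sub>M \<mu>')" unfolding h_def using gm h1m' by measurable
  have hnn: "\<And>x. 0 \<le> h x" unfolding h_def using gnn h1nn by simp
  have Pd: "P = density (PW \<Otimes>\<^sub>M \<mu>') (\<lambda>x. ennreal (h x))"
  proof -
    have "P = density (density (PW \<Otimes>\<^sub>M \<mu>') G) (\<lambda>x. ennreal (h1 x))"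
      using Pd1 prodd by simp
    also have "\<dots> = density (PW \<Otimes>\<^sub>M \<mu>') (\<lambda>x. G x * ennreal (h1 x))"
      by (rule density_density_eq) (use Gm h1m' in auto)
    also have "\<dots> = density (PW \<Otimes>\<^sub>M \<mu>') (\<lambda>x. ennreal (h x))"
      by (simp add: G_def h_def ennreal_mult gnn h1nn)
    finally show ?thesis .
  qed
  have AEh: "AE x in P. 0 < h x" by (subst Pd, subst AE_density) (use hm in auto)
  have snd_m: "snd \<in> measurable P \<mu>'"
    using measurable_cong_sets[OF sets_P refl] by auto
  have hmP: "h \<in> borel_measurable P" "h1 \<in> borel_measurable P"
    using hm h1m' measurable_cong_sets[OF sets_P refl] by auto
  have gsi: "integrable P (\<lambda>x. ln (g (snd x)))"
  proof -
    have "integrable (distr P \<mu>' snd) (\<lambda>x. ln (g x))" using gi marg by simp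
    then show ?thesis by (subst (asm) integrable_distr_eq[OF snd_m]) (use gm in auto)
  qed
  have gsI: "(\<integral>x. ln (g (snd x)) \<partial>P) = (\<integral>x. ln (g x) \<partial>\<mu>)"
    using integral_distr[OF snd_m, of "\<lambda>x. ln (g x)"] gm marg by simp
  have AEeq: "AE x in P. ln (h x) = ln (h1 x) + ln (g (snd x))"
    using AEh
  proof eventually_elim
    case (elim x)
    have "0 < g (snd x)" "0 < h1 x"
      using elim gnn[of "snd x"] h1nn[of x] unfolding h_def
      by (auto simp: zero_less_mult_iff)
    then show ?case by (simp add: h_def ln_mult)
  qed
  have hi: "integrable P (\<lambda>x. ln (h x))"
  proof -
    have "integrable P (\<lambda>x. ln (h1 x) + ln (g (snd x)))" using h1i gsi by simp
    then show ?thesis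
      by (subst integrable_cong_AE[OF _ _ AEeq]) (use hmP snd_m gm in auto)
  qed
  have "(\<integral>x. ln (h x) \<partial>P) = (\<integral>x. ln (h1 x) + ln (g (snd x)) \<partial>P)"
    by (rule integral_cong_AE) (use hmP snd_m gm AEeq in auto)
  also have "\<dots> = (\<integral>x. ln (h1 x) \<partial>P) + (\<integral>x. ln (g x) \<partial>\<mu>)"
    using h1i gsi gsI by simp
  finally have "ereal (\<integral>x. ln (h x) \<partial>P) = KL_ext (exp 1) (PW \<Otimes>\<^sub>M \<mu>) P + KL_ext (exp 1) \<mu>' \<mu>"
    using K1 K2 by simp
  then show ?thesis using that hm hnn Pd hi by blast
qed

lemma ereal_mult_sum:
  fixes c :: real and f :: "'i \<Rightarrow> ereal"
  assumes "0 \<le> c"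
  shows "ereal c * sum f A = (\<Sum>i\<in>A. ereal c * f i)"
proof (cases "c = 0")
  case True then show ?thesis by (simp add: zero_ereal_def[symmetric])
next
  case False
  then have c: "0 < c" using assms by simp
  have d: "ereal c * (a + b) = ereal c * a + ereal c * b" for a b :: ereal
    using c by (cases a; cases b) (auto simp: distrib_left)
  show ?thesis
    by (induction A rule: infinite_finite_induct) (auto simp: d)
qed



lemma int_csum:
  fixes L :: "'i \<Rightarrow> 'a \<Rightarrow> real"
  assumes c: "0 \<le> c" and I: "finite I" and ci: "integrable M (\<lambda>x. c * (\<Sum>i\<in>I. L i x))"
    and nn: "\<And>i x. 0 \<le> L i x" and Lm: "\<And>i. i \<in> I \<Longrightarrow> L i \<in> borel_measurable M"
  shows "(\<integral>x. c * (\<Sum>i\<in>I. L i x) \<partial>M) = c * (\<Sum>i\<in>I. \<integral>x. L i x \<partial>M)"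
    and "0 < c \<Longrightarrow> i \<in> I \<Longrightarrow> integrable M (L i)"
proof -
  have each: "integrable M (L i)" if "0 < c" "i \<in> I" for i
  proof -
    have si: "integrable M (\<lambda>x. \<Sum>i\<in>I. L i x)" using ci that by simp
    show ?thesis
    proof (rule Bochner_Integration.integrable_bound[OF si])
      show "L i \<in> borel_measurable M" using Lm that by simp
      show "AE x in M. norm (L i x) \<le> norm (\<Sum>i\<in>I. L i x)"
        using member_le_sum[of i I "\<lambda>i. L i _"] nn I that
        by (auto intro!: AE_I2 simp: sum_nonneg)
    qed
  qed
  then show "0 < c \<Longrightarrow> i \<in> I \<Longrightarrow> integrable M (L i)" by blast
  show "(\<integral>x. c * (\<Sum>i\<in>I. L i x) \<partial>M) = c * (\<Sum>i\<in>I. \<integral>x. L i x \<partial>M)"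
  proof (cases "c = 0")
    case True then show ?thesis by simp
  next
    case False
    then have "0 < c" using c by simp
    then show ?thesis using each by (simp add: integral_sum)
  qed
qed

theorem theorem1:
  fixes M :: "'a measure" and MW :: "'w measure" and \<mu> \<mu>' :: "'z measure"
    and loss :: "'w \<Rightarrow> 'z \<Rightarrow> real" and W :: "'a \<Rightarrow> 'w" and Z :: "nat \<Rightarrow> 'a \<Rightarrow> 'z"
    and n k :: nat and \<alpha> \<beta> bm bp :: real and \<psi> :: "real \<Rightarrow> real"
  assumes M: "prob_space M"
    and mu: "prob_space \<mu>" and mu': "prob_space \<mu>'" and sets_mu: "sets \<mu> = sets \<mu>'"
    and ac: "absolutely_continuous \<mu>' \<mu>"
    and loss_meas: "(\<lambda>(w, z). loss w z) \<in> borel_measurable (MW \<Otimes>\<^sub>M \<mu>')"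
    and loss_nonneg: "\<And>w z. 0 \<le> loss w z"
    and n_pos: "0 < n" and beta: "0 < \<beta>" "\<beta> < 1" and k_def: "real k = \<beta> * real n"
    and alpha: "0 \<le> \<alpha>" "\<alpha> \<le> 1"
    and indep: "prob_space.indep_vars M (\<lambda>_. \<mu>') Z {1..n}"
    and distr_target: "\<And>i. i \<in> {1..k} \<Longrightarrow> distr M \<mu>' (Z i) = \<mu>'"
    and distr_source: "\<And>i. i \<in> {k+1..n} \<Longrightarrow> distr M \<mu>' (Z i) = \<mu>"
    and W_meas: "W \<in> measurable M MW"
    and ERM: "AE x in M. \<forall>w\<in>space MW.
                 Lhat loss \<alpha> \<beta> k n (W x) (\<lambda>i. Z i x) \<le> Lhat loss \<alpha> \<beta> k n w (\<lambda>i. Z i x)"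
    and gen_int: "integrable M (\<lambda>x. gen_err loss \<mu>' \<alpha> \<beta> k n (W x) (\<lambda>i. Z i x))"
    and b: "bm < 0" "0 < bp"
    and loss_int: "integrable (distr M MW W \<Otimes>\<^sub>M \<mu>') (\<lambda>(w, z). loss w z)"
    and cgf_int: "\<And>l. l \<in> {bm<..<bp} \<Longrightarrow>
        integrable (distr M MW W \<Otimes>\<^sub>M \<mu>')
          (\<lambda>(w, z). exp (l * (loss w z - (\<integral>(w', z'). loss w' z' \<partial>(distr M MW W \<Otimes>\<^sub>M \<mu>')))))"
    and cgf_bound: "\<And>l. l \<in> {bm<..<bp} \<Longrightarrow>
        ln (\<integral>(w, z). exp (l * (loss w z - (\<integral>(w', z'). loss w' z' \<partial>(distr M MW W \<Otimes>\<^sub>M \<mu>'))))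
              \<partial>(distr M MW W \<Otimes>\<^sub>M \<mu>')) \<le> \<psi> l"
  shows "ereal (\<integral>x. gen_err loss \<mu>' \<alpha> \<beta> k n (W x) (\<lambda>i. Z i x) \<partial>M)
           \<le> ereal (\<alpha> / (\<beta> * real n)) *
               (\<Sum>i\<in>{1..k}. psi_inv (\<lambda>l. \<psi> (- l)) (- bm) (MI_ext (exp 1) M MW \<mu>' W (Z i)))
             + ereal ((1 - \<alpha>) / ((1 - \<beta>) * real n)) *
               (\<Sum>i\<in>{k+1..n}. psi_inv (\<lambda>l. \<psi> (- l)) (- bm)
                   (MI_ext (exp 1) M MW \<mu>' W (Z i) + KL_ext (exp 1) \<mu>' \<mu>))
       \<and> - ereal (\<integral>x. gen_err loss \<mu>' \<alpha> \<beta> k n (W x) (\<lambda>i. Z i x) \<partial>M)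
           \<le> ereal (\<alpha> / (\<beta> * real n)) *
               (\<Sum>i\<in>{1..k}. psi_inv \<psi> bp (MI_ext (exp 1) M MW \<mu>' W (Z i)))
             + ereal ((1 - \<alpha>) / ((1 - \<beta>) * real n)) *
               (\<Sum>i\<in>{k+1..n}. psi_inv \<psi> bp
                   (MI_ext (exp 1) M MW \<mu>' W (Z i) + KL_ext (exp 1) \<mu>' \<mu>))"
proof -
  interpret M: prob_space M by fact
  interpret mu: prob_space \<mu> by fact
  interpret mu': prob_space \<mu>' by fact
  note [measurable] = W_meas loss_meas
  have Zm: "\<And>i. i \<in> {1..n} \<Longrightarrow> Z i \<in> measurable M \<mu>'"
    using indep unfolding M.indep_vars_def by auto
  define PW where "PW = distr M MW W"
  have PWp: "prob_space PW" unfolding PW_def by (rule M.prob_space_distr) simp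
  interpret PW: prob_space PW by fact
  define Q where "Q = PW \<Otimes>\<^sub>M \<mu>'"
  have Qp: "prob_space Q" unfolding Q_def by (intro prob_space_pair PWp mu')
  have sets_Q: "sets Q = sets (MW \<Otimes>\<^sub>M \<mu>')" unfolding Q_def PW_def
    by (intro sets_pair_measure_cong) auto
  have lossQ: "(\<lambda>(w, z). loss w z) \<in> borel_measurable Q"
    using loss_meas measurable_cong_sets[OF sets_Q refl] by blast
  define m where "m = (\<integral>(w, z). loss w z \<partial>Q)"
  define Lx where "Lx i x = loss (W x) (Z i x)" for i x
  define e where "e i = (\<integral>x. Lx i x \<partial>M)" for i
  define MI where "MI i = MI_ext (exp 1) M MW \<mu>' W (Z i)" for i
  define KL where "KL = KL_ext (exp 1) \<mu>' \<mu>"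
  define D where "D i = (if i \<le> k then MI i else MI i + KL)" for i
  have ci: "\<And>l. l \<in> {bm<..<bp} \<Longrightarrow> integrable Q (\<lambda>x. exp (l * ((\<lambda>(w, z). loss w z) x - m)))"
  proof -
    fix l assume "l \<in> {bm<..<bp}"
    from cgf_int[OF this] show "integrable Q (\<lambda>x. exp (l * ((\<lambda>(w, z). loss w z) x - m)))"
      unfolding Q_def PW_def m_def by (simp add: case_prod_beta')
  qed
  have cb: "\<And>l. l \<in> {bm<..<bp} \<Longrightarrow> ln (\<integral>x. exp (l * ((\<lambda>(w, z). loss w z) x - m)) \<partial>Q) \<le> \<psi> l"
  proof -
    fix l assume "l \<in> {bm<..<bp}"
    from cgf_bound[OF this] show "ln (\<integral>x. exp (l * ((\<lambda>(w, z). loss w z) x - m)) \<partial>Q) \<le> \<psi> l"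
      unfolding Q_def PW_def m_def by (simp add: case_prod_beta')
  qed
  have key: "ereal (l * (e i - m)) \<le> D i + ereal (\<psi> l)"
    if i: "i \<in> {1..n}" and Li: "integrable M (Lx i)" and l: "l \<in> {bm<..<bp}" for i l
  proof -
    have Zi[measurable]: "Z i \<in> measurable M \<mu>'" using Zm i by auto
    define P where "P = distr M (MW \<Otimes>\<^sub>M \<mu>') (\<lambda>x. (W x, Z i x))"
    have Pp: "prob_space P" unfolding P_def by (rule M.prob_space_distr) simp
    have sets_P: "sets P = sets Q" unfolding P_def using sets_Q by simp
    have LiP: "integrable P (\<lambda>(w, z). loss w z)" unfolding P_def
      by (subst integrable_distr_eq) (use Li in \<open>auto simp: Lx_def[abs_def]\<close>)
    have eP: "e i = (\<integral>x. (\<lambda>(w, z). loss w z) x \<partial>P)" unfolding P_def e_def Lx_def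
      by (subst integral_distr) auto
    have gen: "ereal (l * (e i - m)) \<le> DD + ereal (\<psi> l)"
      if "P = density Q (\<lambda>x. ennreal (h x))" "h \<in> borel_measurable Q" "\<And>x. 0 \<le> h x"
        "integrable P (\<lambda>x. ln (h x))" "ereal (\<integral>x. ln (h x) \<partial>P) \<le> DD" for h DD
      unfolding eP by (rule term_bound[OF Qp Pp that(1,2,3,4,5) lossQ LiP ci cb l])
    show ?thesis
    proof (cases "i \<le> k")
      case True
      have MIe: "MI i = KL_ext (exp 1) Q P"
        unfolding MI_def MI_ext_def Q_def PW_def P_def using distr_target[of i] True i by simp
      show ?thesis
      proof (cases "MI i = \<infinity>")
        case True then show ?thesis using \<open>i \<le> k\<close> by (simp add: D_def)
      next
        case False
        obtain h where "h \<in> borel_measurable Q" "\<And>x. 0 \<le> h x"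
          "P = density Q (\<lambda>x. ennreal (h x))" "integrable P (\<lambda>x. ln (h x))"
          "KL_ext (exp 1) Q P = ereal (\<integral>x. ln (h x) \<partial>P)"
          using KL_finite_density[OF Qp Pp sets_P] False MIe by metis
        then show ?thesis using gen[of h "D i"] \<open>i \<le> k\<close> MIe by (simp add: D_def)
      qed
    next
      case False
      then have ik: "i \<in> {k+1..n}" using i by auto
      have MIe: "MI i = KL_ext (exp 1) (PW \<Otimes>\<^sub>M \<mu>) P"
        unfolding MI_def MI_ext_def PW_def P_def using distr_source[OF ik] by simp
      have marg: "distr P \<mu>' snd = \<mu>" unfolding P_def
        by (subst distr_distr) (auto simp: comp_def distr_source[OF ik])
      show ?thesis
      proof (cases "MI i = \<infinity> \<or> KL = \<infinity>")
        case True then show ?thesis using \<open>\<not> i \<le> k\<close> by (auto simp: D_def)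
      next
        case False
        have sets_P': "sets P = sets (PW \<Otimes>\<^sub>M \<mu>')" using sets_P by (simp add: Q_def)
        obtain h where "h \<in> borel_measurable (PW \<Otimes>\<^sub>M \<mu>')" "\<And>x. 0 \<le> h x"
          "P = density (PW \<Otimes>\<^sub>M \<mu>') (\<lambda>x. ennreal (h x))" "integrable P (\<lambda>x. ln (h x))"
          "ereal (\<integral>x. ln (h x) \<partial>P) = KL_ext (exp 1) (PW \<Otimes>\<^sub>M \<mu>) P + KL_ext (exp 1) \<mu>' \<mu>"
          using source_density[OF PWp mu mu' sets_mu Pp sets_P' marg] False MIe KL_def by metis
        then show ?thesis using gen[of h "D i"] \<open>\<not> i \<le> k\<close> MIe
          by (simp add: D_def KL_def Q_def)
      qed
    qed
  qed
  have pbnd: "ereal (m - e i) \<le> psi_inv (\<lambda>l. \<psi> (- l)) (- bm) (D i)"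
    "ereal (e i - m) \<le> psi_inv \<psi> bp (D i)"
    if "i \<in> {1..n}" "integrable M (Lx i)" for i
    using psi_bounds[OF b key[OF that]] by auto
  define A where "A = \<alpha> / (\<beta> * real n)"
  define B where "B = (1 - \<alpha>) / ((1 - \<beta>) * real n)"
  have A0: "0 \<le> A" and B0: "0 \<le> B" unfolding A_def B_def using alpha beta n_pos by auto
  have A0e: "0 \<le> ereal A" and B0e: "0 \<le> ereal B" using A0 B0 by auto
  have kpos: "0 < k" using k_def beta n_pos
    by (metis mult_pos_pos of_nat_0_less_iff)
  have kn: "k < n"
  proof -
    have "real k < real n" using k_def beta n_pos by simp
    then show ?thesis by simp
  qed
  have kA: "real k * A = \<alpha>" unfolding A_def k_def using beta n_pos by simp
  have nkB: "real (n - k) * B = 1 - \<alpha>"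
  proof -
    have "real (n - k) = (1 - \<beta>) * real n" using kn k_def by (simp add: of_nat_diff algebra_simps)
    moreover have "(1 - \<beta>) * real n \<noteq> 0" using beta n_pos by simp
    ultimately show ?thesis unfolding B_def by simp
  qed
  have Lxm: "\<And>i. i \<in> {1..n} \<Longrightarrow> Lx i \<in> borel_measurable M"
  proof -
    fix i assume "i \<in> {1..n}"
    then have [measurable]: "Z i \<in> measurable M \<mu>'" using Zm by auto
    show "Lx i \<in> borel_measurable M" unfolding Lx_def[abs_def]
      using measurable_Pair[OF W_meas \<open>Z i \<in> measurable M \<mu>'\<close>] loss_meas
      by (auto dest: measurable_compose)
  qed
  have Lhat_eq: "\<And>x. Lhat loss \<alpha> \<beta> k n (W x) (\<lambda>i. Z i x)
      = A * (\<Sum>i\<in>{1..k}. Lx i x) + B * (\<Sum>i\<in>{k+1..n}. Lx i x)"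
    by (simp add: Lhat_def A_def B_def Lx_def)
  interpret ps: pair_sigma_finite PW \<mu>'
    by (simp add: pair_sigma_finite_def PW.sigma_finite_measure_axioms mu'.sigma_finite_measure_axioms)
  have loss_intQ: "integrable (PW \<Otimes>\<^sub>M \<mu>') (\<lambda>(w, z). loss w z)" using loss_int by (simp add: PW_def)
  have popm: "(\<lambda>w. pop_risk loss \<mu>' w) \<in> borel_measurable MW"
    unfolding pop_risk_def by (rule mu'.borel_measurable_lebesgue_integral) (use loss_meas in simp)
  have popPW: "integrable PW (\<lambda>w. pop_risk loss \<mu>' w)"
    using ps.integrable_fst'[OF loss_intQ] by (simp add: pop_risk_def)
  have popI: "integrable M (\<lambda>x. pop_risk loss \<mu>' (W x))"
    using popPW unfolding PW_def by (subst (asm) integrable_distr_eq) (use popm in auto)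
  have popE: "(\<integral>x. pop_risk loss \<mu>' (W x) \<partial>M) = m"
  proof -
    have "(\<integral>x. pop_risk loss \<mu>' (W x) \<partial>M) = (\<integral>w. pop_risk loss \<mu>' w \<partial>PW)"
      unfolding PW_def by (subst integral_distr) (use popm in auto)
    also have "\<dots> = m" unfolding m_def Q_def pop_risk_def
      using ps.integral_fst'[OF loss_intQ] by simp
    finally show ?thesis .
  qed
  have genE: "\<And>x. gen_err loss \<mu>' \<alpha> \<beta> k n (W x) (\<lambda>i. Z i x)
      = pop_risk loss \<mu>' (W x) - (A * (\<Sum>i\<in>{1..k}. Lx i x) + B * (\<Sum>i\<in>{k+1..n}. Lx i x))"
    by (simp add: gen_err_def Lhat_eq)
  have LhI: "integrable M (\<lambda>x. A * (\<Sum>i\<in>{1..k}. Lx i x) + B * (\<Sum>i\<in>{k+1..n}. Lx i x))"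
  proof -
    have "integrable M (\<lambda>x. pop_risk loss \<mu>' (W x) - gen_err loss \<mu>' \<alpha> \<beta> k n (W x) (\<lambda>i. Z i x))"
      using popI gen_int by simp
    then show ?thesis by (simp add: genE)
  qed
  have Lnn: "\<And>i x. 0 \<le> Lx i x" by (simp add: Lx_def loss_nonneg)
  have SAm: "(\<lambda>x. A * (\<Sum>i\<in>{1..k}. Lx i x)) \<in> borel_measurable M"
    using Lxm kn by (intro borel_measurable_times borel_measurable_const borel_measurable_sum) auto
  have SBm: "(\<lambda>x. B * (\<Sum>i\<in>{k+1..n}. Lx i x)) \<in> borel_measurable M"
    using Lxm kn by (intro borel_measurable_times borel_measurable_const borel_measurable_sum) auto
  have SAI: "integrable M (\<lambda>x. A * (\<Sum>i\<in>{1..k}. Lx i x))"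
  proof (rule Bochner_Integration.integrable_bound[OF LhI SAm])
    show "AE x in M. norm (A * (\<Sum>i\<in>{1..k}. Lx i x)) \<le> norm (A * (\<Sum>i\<in>{1..k}. Lx i x) + B * (\<Sum>i\<in>{k+1..n}. Lx i x))"
      using A0 B0 Lnn by (intro AE_I2) (simp add: sum_nonneg)
  qed
  have SBI: "integrable M (\<lambda>x. B * (\<Sum>i\<in>{k+1..n}. Lx i x))"
  proof (rule Bochner_Integration.integrable_bound[OF LhI SBm])
    show "AE x in M. norm (B * (\<Sum>i\<in>{k+1..n}. Lx i x)) \<le> norm (A * (\<Sum>i\<in>{1..k}. Lx i x) + B * (\<Sum>i\<in>{k+1..n}. Lx i x))"
      using A0 B0 Lnn by (intro AE_I2) (simp add: sum_nonneg)
  qed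
  have LmA: "\<And>i. i \<in> {1..k} \<Longrightarrow> Lx i \<in> borel_measurable M" using Lxm kn by auto
  have LmB: "\<And>i. i \<in> {k+1..n} \<Longrightarrow> Lx i \<in> borel_measurable M" using Lxm kn by auto
  note csA = int_csum[OF A0 finite_atLeastAtMost SAI Lnn LmA]
  note csB = int_csum[OF B0 finite_atLeastAtMost SBI Lnn LmB]
  have GE: "(\<integral>x. gen_err loss \<mu>' \<alpha> \<beta> k n (W x) (\<lambda>i. Z i x) \<partial>M)
      = m - A * (\<Sum>i\<in>{1..k}. e i) - B * (\<Sum>i\<in>{k+1..n}. e i)"
  proof -
    have cA: "A * (\<integral>x. (\<Sum>i\<in>{1..k}. Lx i x) \<partial>M) = A * (\<Sum>i\<in>{1..k}. e i)"
      using csA(1) by (simp add: e_def)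
    have cB: "B * (\<integral>x. (\<Sum>i\<in>{k+1..n}. Lx i x) \<partial>M) = B * (\<Sum>i\<in>{k+1..n}. e i)"
      using csB(1) by (simp add: e_def)
    show ?thesis
      unfolding genE using popI SAI SBI popE cA cB by (cases "A = 0"; cases "B = 0"; simp)
  qed
  define S1 where "S1 = (\<Sum>i\<in>{1..k}. A * (m - e i))"
  define S2 where "S2 = (\<Sum>i\<in>{k+1..n}. B * (m - e i))"
  have GS: "(\<integral>x. gen_err loss \<mu>' \<alpha> \<beta> k n (W x) (\<lambda>i. Z i x) \<partial>M) = S1 + S2"
  proof -
    have "S1 = real k * A * m - A * (\<Sum>i\<in>{1..k}. e i)"
      unfolding S1_def by (simp add: right_diff_distrib sum_subtractf sum_distrib_left)
    moreover have "S2 = real (n - k) * B * m - B * (\<Sum>i\<in>{k+1..n}. e i)"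
      unfolding S2_def by (simp add: right_diff_distrib sum_subtractf sum_distrib_left)
    moreover have "(real k * A) * m + (real (n - k) * B) * m = \<alpha> * m + (1 - \<alpha>) * m"
      by (simp only: kA nkB)
    ultimately show ?thesis unfolding GE by (simp add: algebra_simps)
  qed
  have tA: "ereal (A * (m - e i)) \<le> ereal A * psi_inv (\<lambda>l. \<psi> (- l)) (- bm) (MI i)
      \<and> ereal (A * (e i - m)) \<le> ereal A * psi_inv \<psi> bp (MI i)" if i: "i \<in> {1..k}" for i
  proof (cases "A = 0")
    case True then show ?thesis by (simp add: zero_ereal_def[symmetric])
  next
    case False
    then have "0 < A" using A0 by simp
    then have Li: "integrable M (Lx i)" using csA(2) i by blast
    have iD: "D i = MI i" using i by (simp add: D_def)
    have i1: "i \<in> {1..n}" using i kn by auto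
    show ?thesis
      using ereal_mult_left_mono[OF pbnd(1)[OF i1 Li] A0e] ereal_mult_left_mono[OF pbnd(2)[OF i1 Li] A0e]
      by (simp add: iD)
  qed
  have tB: "ereal (B * (m - e i)) \<le> ereal B * psi_inv (\<lambda>l. \<psi> (- l)) (- bm) (MI i + KL)
      \<and> ereal (B * (e i - m)) \<le> ereal B * psi_inv \<psi> bp (MI i + KL)" if i: "i \<in> {k+1..n}" for i
  proof (cases "B = 0")
    case True then show ?thesis by (simp add: zero_ereal_def[symmetric])
  next
    case False
    then have "0 < B" using B0 by simp
    then have Li: "integrable M (Lx i)" using csB(2) i by blast
    have iD: "D i = MI i + KL" using i by (simp add: D_def)
    have i1: "i \<in> {1..n}" using i kn by auto
    show ?thesis
      using ereal_mult_left_mono[OF pbnd(1)[OF i1 Li] B0e] ereal_mult_left_mono[OF pbnd(2)[OF i1 Li] B0e]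
      by (simp add: iD)
  qed
  have s1: "ereal S1 \<le> ereal A * (\<Sum>i\<in>{1..k}. psi_inv (\<lambda>l. \<psi> (- l)) (- bm) (MI i))"
    unfolding S1_def sum_ereal[symmetric] ereal_mult_sum[OF A0]
    by (rule sum_mono) (use tA in blast)
  have s1': "ereal (- S1) \<le> ereal A * (\<Sum>i\<in>{1..k}. psi_inv \<psi> bp (MI i))"
  proof -
    have "- S1 = (\<Sum>i\<in>{1..k}. A * (e i - m))" unfolding S1_def
      by (simp add: sum_negf[symmetric] algebra_simps)
    then have "ereal (- S1) = (\<Sum>i\<in>{1..k}. ereal (A * (e i - m)))" by simp
    also have "\<dots> \<le> (\<Sum>i\<in>{1..k}. ereal A * psi_inv \<psi> bp (MI i))"
      by (rule sum_mono) (use tA in blast)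
    also have "\<dots> = ereal A * (\<Sum>i\<in>{1..k}. psi_inv \<psi> bp (MI i))"
      by (rule ereal_mult_sum[OF A0, symmetric])
    finally show ?thesis .
  qed
  have s2: "ereal S2 \<le> ereal B * (\<Sum>i\<in>{k+1..n}. psi_inv (\<lambda>l. \<psi> (- l)) (- bm) (MI i + KL))"
    unfolding S2_def sum_ereal[symmetric] ereal_mult_sum[OF B0]
    by (rule sum_mono) (use tB in blast)
  have s2': "ereal (- S2) \<le> ereal B * (\<Sum>i\<in>{k+1..n}. psi_inv \<psi> bp (MI i + KL))"
  proof -
    have "- S2 = (\<Sum>i\<in>{k+1..n}. B * (e i - m))" unfolding S2_def
      by (simp add: sum_negf[symmetric] algebra_simps)
    then have "ereal (- S2) = (\<Sum>i\<in>{k+1..n}. ereal (B * (e i - m)))" by simp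
    also have "\<dots> \<le> (\<Sum>i\<in>{k+1..n}. ereal B * psi_inv \<psi> bp (MI i + KL))"
      by (rule sum_mono) (use tB in blast)
    also have "\<dots> = ereal B * (\<Sum>i\<in>{k+1..n}. psi_inv \<psi> bp (MI i + KL))"
      by (rule ereal_mult_sum[OF B0, symmetric])
    finally show ?thesis .
  qed
  have r1: "ereal (S1 + S2) \<le> ereal A * (\<Sum>i\<in>{1..k}. psi_inv (\<lambda>l. \<psi> (- l)) (- bm) (MI i))
      + ereal B * (\<Sum>i\<in>{k+1..n}. psi_inv (\<lambda>l. \<psi> (- l)) (- bm) (MI i + KL))"
    using add_mono[OF s1 s2] by simp
  have r2: "- ereal (S1 + S2) \<le> ereal A * (\<Sum>i\<in>{1..k}. psi_inv \<psi> bp (MI i))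
      + ereal B * (\<Sum>i\<in>{k+1..n}. psi_inv \<psi> bp (MI i + KL))"
    using add_mono[OF s1' s2'] by simp
  show ?thesis using r1 r2 unfolding GS A_def B_def MI_def KL_def by simp
qed


end
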